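(* Let $n\ge2$ and let $T_n(t)=\sum_{m=1}^n(a_m\cos mt+b_m\sin mt)$ with $a_m,b_m\in\mathbb{R}$. For $\nu\in\{1,\dots,n\}$, let $t_1,\dots,t_{2n+1}\in[0,2\pi)$ be the arguments of the $2n+1$ roots of the polynomial $s_n(z)+z^{2n+1}s_n(1/z)$, where $s_n(z)=\sum_{j=0}^{\lfloor n/\nu\rfloor}\frac{(-z^\nu)^j}{\nu^jj!}$. Then \[a_\nu=\sum_{k=1}^{2n+1}T_n(-t_k),\qquad b_\nu=\sum_{k=1}^{2n+1}T_n\!\left(\frac{\pi}{2\nu}-t_k\right),\qquad\nu=1,\dots,n.\] *)

theory Defs
  imports "HOL-Analysis.Analysis" "HOL-Computational_Algebra.Computational_Algebra"
begin

definition trig_poly :: "nat \<Rightarrow> (nat \<Rightarrow> real) \<Rightarrow> (nat \<Rightarrow> real) \<Rightarrow> real \<Rightarrow> real" where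
  "trig_poly n a b t = (\<Sum>m=1..n. a m * cos (real m * t) + b m * sin (real m * t))"

definition s_coeff :: "nat \<Rightarrow> nat \<Rightarrow> complex" where
  "s_coeff \<nu> j = (-1) ^ j / (of_nat \<nu> ^ j * of_nat (fact j))"

definition s_poly :: "nat \<Rightarrow> nat \<Rightarrow> complex poly" where
  "s_poly n \<nu> = (\<Sum>j=0..n div \<nu>. monom (s_coeff \<nu> j) (\<nu> * j))"

text \<open>z^(2n+1) s_n(1/z), written out termwise (valid since nu j <= n < 2n+1).\<close>
definition s_rev_poly :: "nat \<Rightarrow> nat \<Rightarrow> complex poly" where
  "s_rev_poly n \<nu> = (\<Sum>j=0..n div \<nu>. monom (s_coeff \<nu> j) (2 * n + 1 - \<nu> * j))"

definition root_poly :: "nat \<Rightarrow> nat \<Rightarrow> complex poly" where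
  "root_poly n \<nu> = s_poly n \<nu> + s_rev_poly n \<nu>"

end

theory Submission
  imports Defs "HOL-Complex_Analysis.Complex_Analysis"
begin


lemma msum_swap: "(\<Sum>z\<in>#R. \<Sum>m\<in>A. f m z) = (\<Sum>m\<in>A. \<Sum>z\<in>#R. f m z)"
  by (induction R) (auto simp: sum.distrib)

lemma msum_cmult: "(\<Sum>z\<in>#R. (c::'a::comm_ring) * f z) = c * (\<Sum>z\<in>#R. f z)"
  by (induction R) (auto simp: algebra_simps)

lemma msum_add: "(\<Sum>z\<in>#R. (f z + g z :: 'a::comm_ring)) = (\<Sum>z\<in>#R. f z) + (\<Sum>z\<in>#R. g z)"
  by (induction R) (auto simp: algebra_simps)

lemma msum_Re: "Re (\<Sum>z\<in>#R. f z) = (\<Sum>z\<in>#R. Re (f z))"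
  by (induction R) auto

lemma msum_Im: "Im (\<Sum>z\<in>#R. f z) = (\<Sum>z\<in>#R. Im (f z))"
  by (induction R) auto

definition Gf :: "complex multiset \<Rightarrow> complex fps" where
  "Gf R = Abs_fps (\<lambda>m. \<Sum>z\<in>#R. z ^ Suc m)"

definition Ff :: "complex multiset \<Rightarrow> complex fps" where
  "Ff R = (\<Prod>z\<in>#R. (1 - fps_const z * fps_X))"

lemma geom_fps: "(1 - fps_const z * fps_X) * Abs_fps (\<lambda>m. z ^ Suc m) = fps_const (z::complex)"
proof (rule fps_ext)
  fix m
  have "(fps_const z * fps_X * Abs_fps (\<lambda>m. z ^ Suc m)) $ m = z * (fps_X * Abs_fps (\<lambda>m. z ^ Suc m)) $ m"
    by (simp add: mult.assoc)
  then show "((1 - fps_const z * fps_X) * Abs_fps (\<lambda>m. z ^ Suc m)) $ m = fps_const z $ m"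
    by (cases m) (auto simp: algebra_simps)
qed

lemma newton_fps: "fps_deriv (Ff R) = - Ff R * Gf R"
proof (induction R)
  case empty
  then show ?case by (simp add: Ff_def Gf_def fps_eq_iff)
next
  case (add z R)
  have F: "Ff (add_mset z R) = (1 - fps_const z * fps_X) * Ff R" by (simp add: Ff_def)
  have G: "Gf (add_mset z R) = Gf R + Abs_fps (\<lambda>m. z ^ Suc m)"
    by (simp add: Gf_def fps_eq_iff)
  define H where "H = Abs_fps (\<lambda>m. z ^ Suc m)"
  have d1: "fps_deriv (1 - fps_const z * fps_X) = - fps_const z" by simp
  have "fps_deriv (Ff (add_mset z R)) = - fps_const z * Ff R + (1 - fps_const z * fps_X) * fps_deriv (Ff R)"
    unfolding F fps_deriv_mult d1 by simp
  also have "\<dots> = - ((1 - fps_const z * fps_X) * H) * Ff R + (1 - fps_const z * fps_X) * (- Ff R * Gf R)"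
    unfolding H_def geom_fps add.IH by simp
  also have "\<dots> = - Ff (add_mset z R) * Gf (add_mset z R)"
    unfolding F G H_def[symmetric] by (simp add: algebra_simps)
  finally show ?case .
qed

lemma fact_tail: "M \<ge> 2 \<Longrightarrow> (\<Sum>j=3..M. 1 / fact j) + 1 / (2 * fact M) \<le> (1/4::real)"
proof (induction M rule: nat_induct_at_least)
  case base
  then show ?case by (simp add: fact_numeral)
next
  case (Suc M)
  have f: "(fact (Suc M) :: real) = (real M + 1) * fact M" by simp
  have Fp: "(fact M :: real) > 0" by simp
  have D: "(real M + 1) * fact M \<noteq> (0::real)" using Fp by simp
  have "1 / fact (Suc M) + 1 / (2 * fact (Suc M)) = (3/2) / ((real M + 1) * fact M :: real)"
  proof -
    have g: "\<And>D::real. D \<noteq> 0 \<Longrightarrow> 1/D + 1/(2*D) = (3/2)/D" by (simp add: field_simps)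
    show ?thesis using g[of "fact (Suc M)"] unfolding f using D by simp
  qed
  also have "\<dots> \<le> (3/2) / (3 * fact M)"
    using Suc.hyps Fp by (intro divide_left_mono mult_right_mono mult_pos_pos) auto
  also have "\<dots> = 1 / (2 * fact M)" by simp
  finally have "1 / fact (Suc M) + 1 / (2 * fact (Suc M)) \<le> 1 / (2 * fact M :: real)" .
  moreover have "(\<Sum>j=3..Suc M. 1/fact j) = (\<Sum>j=3..M. 1/fact j) + (1/fact (Suc M) :: real)"
    using Suc.hyps by (simp add: sum.cl_ivl_Suc)
  ultimately show ?case using Suc.IH by linarith
qed

lemma quad_bound:
  assumes "cmod w \<le> 1" shows "cmod (1 + w + w^2/2) \<ge> 1/4"
proof -
  obtain x y where w: "w = Complex x y" by (cases w)
  have xy: "x^2 + y^2 \<le> 1" using assms by (simp add: w cmod_def power2_eq_square)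
  define a where "a = (1+x)^2 + y^2"
  have id: "(cmod (1 + w + w^2/2))^2 = ((1 - a)/2)^2 + (1+x)^2"
  proof -
    have re: "Re (1 + w + w^2/2) = 1 + x + (x*x-y*y)/2" and im: "Im (1 + w + w^2/2) = y + x*y"
      by (simp_all add: w power2_eq_square)
    show ?thesis unfolding cmod_power2 re im a_def by (simp add: power2_eq_square field_simps)
  qed
  have "((1 - a)/2)^2 + (1+x)^2 \<ge> 1/16"
  proof (cases "a \<le> 1/2")
    case True
    then have "(1-a)/2 \<ge> 1/4" by simp
    then have "((1 - a)/2)^2 \<ge> (1/4)^2" by (rule power_mono) simp
    moreover have "(1/4::real)^2 = 1/16" by (simp add: power2_eq_square)
    ultimately show ?thesis using zero_le_power2[of "1+x"] by linarith
  next
    case False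
    have "a \<le> 2 + 2*x" using xy by (simp add: a_def power2_eq_square algebra_simps)
    then have "1 + x \<ge> 1/4" using False by simp
    then have "(1+x)^2 \<ge> (1/4)^2" by (rule power_mono) simp
    moreover have "(1/4::real)^2 = 1/16" by (simp add: power2_eq_square)
    ultimately show ?thesis using zero_le_power2[of "(1-a)/2"] by linarith
  qed
  then have "(cmod (1 + w + w^2/2))^2 \<ge> (1/4)^2" using id by (simp add: power2_eq_square)
  then show ?thesis by (rule power2_le_imp_le) simp
qed

lemma expsum_nz:
  assumes "(cmod w \<le> 1 \<and> M \<noteq> 1) \<or> cmod w < 1"
  shows "(\<Sum>j=0..M. w ^ j / fact j) \<noteq> (0::complex)"
proof -
  consider "M = 0" | "M = 1" | "M \<ge> 2" by linarith
  then show ?thesis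
  proof cases
    case 1 then show ?thesis by simp
  next
    case 2
    then have "cmod w < 1" using assms by auto
    then show ?thesis using 2 by (auto simp: add_eq_0_iff)
  next
    case 3
    have w1: "cmod w \<le> 1" using assms by auto
    have split: "(\<Sum>j=0..M. w ^ j / fact j) = (1 + w + w^2/2) + (\<Sum>j=3..M. w ^ j / fact j)"
      using 3 by (simp add: sum.atLeast_Suc_atMost numeral_3_eq_3 numeral_2_eq_2 fact_numeral)
    have "cmod (\<Sum>j=3..M. w ^ j / fact j) \<le> (\<Sum>j=3..M. cmod (w ^ j / fact j))"
      by (rule norm_sum)
    also have "\<dots> \<le> (\<Sum>j=3..M. 1 / fact j)"
    proof (rule sum_mono)
      fix j assume "j \<in> {3..M}"
      have "cmod (w ^ j / fact j) = cmod w ^ j / fact j" by (simp add: norm_divide norm_power)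
      also have "\<dots> \<le> 1 / fact j" using w1 by (intro divide_right_mono power_le_one) auto
      finally show "cmod (w ^ j / fact j) \<le> 1 / fact j" .
    qed
    also have "\<dots> < 1/4" using fact_tail[OF 3] by (smt (verit) divide_pos_pos fact_gt_zero)
    finally have t: "cmod (\<Sum>j=3..M. w ^ j / fact j) < 1/4" .
    have q: "cmod (1 + w + w^2/2) \<ge> 1/4" by (rule quad_bound[OF w1])
    show ?thesis
    proof
      assume "(\<Sum>j=0..M. w ^ j / fact j) = 0"
      then have "1 + w + w^2/2 = - (\<Sum>j=3..M. w ^ j / fact j)" using split by (simp add: eq_neg_iff_add_eq_0)
      then have "cmod (1 + w + w^2/2) = cmod (\<Sum>j=3..M. w ^ j / fact j)" by simp
      then show False using t q by simp
    qed
  qed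
qed



context
  fixes n \<nu> :: nat
  assumes n2: "n \<ge> 2" and nu1: "1 \<le> \<nu>" and nun: "\<nu> \<le> n"
begin

lemma nuj_le: "j \<le> n div \<nu> \<Longrightarrow> \<nu> * j \<le> n"
  by (meson dual_order.trans mult_le_mono2 times_div_less_eq_dividend)

lemma s_coeff_cnj: "cnj (s_coeff \<nu> j) = s_coeff \<nu> j"
  by (simp add: s_coeff_def)

lemma poly_S: "poly (s_poly n \<nu>) z = (\<Sum>j=0..n div \<nu>. s_coeff \<nu> j * z ^ (\<nu> * j))"
  by (simp add: s_poly_def poly_sum poly_monom)

lemma poly_Q: "poly (s_rev_poly n \<nu>) z = (\<Sum>j=0..n div \<nu>. s_coeff \<nu> j * z ^ (2*n+1 - \<nu> * j))"
  by (simp add: s_rev_poly_def poly_sum poly_monom)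

lemma poly_P: "poly (root_poly n \<nu>) z = poly (s_poly n \<nu>) z + poly (s_rev_poly n \<nu>) z"
  by (simp add: root_poly_def)

lemma poly_S_exp: "poly (s_poly n \<nu>) z = (\<Sum>j=0..n div \<nu>. (-(z^\<nu>) / of_nat \<nu>) ^ j / fact j)"
  unfolding poly_S
proof (rule sum.cong[OF refl])
  fix j
  show "s_coeff \<nu> j * z ^ (\<nu> * j) = (-(z^\<nu>) / of_nat \<nu>) ^ j / fact j"
  proof -
    have "-(z^\<nu>) / of_nat \<nu> = (-1) * (z^\<nu> / (of_nat \<nu> :: complex))" by simp
    then have "(-(z^\<nu>) / of_nat \<nu>) ^ j = (-1)^j * (z^\<nu> / (of_nat \<nu> :: complex))^j"
      by (simp only: power_mult_distrib)
    also have "\<dots> = (-1)^j * z^(\<nu>*j) / (of_nat \<nu> ^ j :: complex)"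
      by (simp only: power_divide power_mult times_divide_eq_right)
    finally have a: "(-(z^\<nu>) / of_nat \<nu>) ^ j = (-1)^j * z^(\<nu>*j) / of_nat \<nu> ^ j" .
    have b: "\<And>(A::complex) B C D. A / (B * C) * D = A * D / B / C"
      by (simp add: divide_inverse mult_ac)
    show ?thesis by (simp only: a s_coeff_def of_nat_fact b)
  qed
qed

lemma Q_refl: "z \<noteq> 0 \<Longrightarrow> poly (s_rev_poly n \<nu>) z = z ^ (2*n+1) * poly (s_poly n \<nu>) (1/z)"
  unfolding poly_Q poly_S sum_distrib_left
proof (rule sum.cong[OF refl])
  fix j assume z: "z \<noteq> 0" and "j \<in> {0..n div \<nu>}"
  then have k: "\<nu> * j \<le> 2*n+1" using nuj_le by force
  show "s_coeff \<nu> j * z ^ (2 * n + 1 - \<nu> * j) = z ^ (2 * n + 1) * (s_coeff \<nu> j * (1 / z) ^ (\<nu> * j))"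
    using z k by (simp add: power_diff power_one_over field_simps)
qed

lemma S_refl: "z \<noteq> 0 \<Longrightarrow> poly (s_poly n \<nu>) z = z ^ (2*n+1) * poly (s_rev_poly n \<nu>) (1/z)"
  unfolding poly_Q poly_S sum_distrib_left
proof (rule sum.cong[OF refl])
  fix j assume z: "z \<noteq> 0" and "j \<in> {0..n div \<nu>}"
  then have k: "\<nu> * j \<le> 2*n+1" using nuj_le by force
  have e: "z ^ (2*n+1) = z ^ (\<nu> * j) * z ^ (2*n+1 - \<nu>*j)"
    using k by (simp add: power_add[symmetric])
  show "s_coeff \<nu> j * z ^ (\<nu> * j) = z ^ (2 * n + 1) * (s_coeff \<nu> j * (1 / z) ^ (2 * n + 1 - \<nu> * j))"
    using z unfolding e by (simp add: power_one_over field_simps)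
qed

lemma S_cnj: "poly (s_poly n \<nu>) (cnj z) = cnj (poly (s_poly n \<nu>) z)"
  unfolding poly_S by (simp add: s_coeff_cnj)

lemma S_nz: "cmod z \<le> 1 \<Longrightarrow> poly (s_poly n \<nu>) z \<noteq> 0"
proof -
  assume z: "cmod z \<le> 1"
  define w where "w = -(z^\<nu>) / of_nat \<nu>"
  have cw: "cmod w = cmod z ^ \<nu> / real \<nu>" by (simp add: w_def norm_divide norm_power)
  have zp: "cmod z ^ \<nu> \<le> 1" using z by (simp add: power_le_one)
  have "(cmod w \<le> 1 \<and> n div \<nu> \<noteq> 1) \<or> cmod w < 1"
  proof (cases "\<nu> = 1")
    case True
    then show ?thesis using n2 zp cw by auto
  next
    case False
    then have "real \<nu> \<ge> 2" using nu1 by simp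
    then have "cmod z ^ \<nu> / real \<nu> \<le> 1/2" using zp by (simp add: field_simps)
    then have "cmod w < 1" using cw by linarith
    then show ?thesis by simp
  qed
  then show ?thesis unfolding poly_S_exp w_def[symmetric] by (rule expsum_nz)
qed

definition q1 :: "complex \<Rightarrow> complex" where
  "q1 z = (\<Sum>j=0..n div \<nu>. s_coeff \<nu> j * z ^ (2*n - \<nu> * j))"

lemma Q_q1: "poly (s_rev_poly n \<nu>) z = z * q1 z"
  unfolding poly_Q q1_def sum_distrib_left
proof (rule sum.cong[OF refl])
  fix j assume "j \<in> {0..n div \<nu>}"
  then have k: "\<nu> * j \<le> n" using nuj_le by force
  then have "2*n+1 - \<nu>*j = Suc (2*n - \<nu>*j)" by simp
  then show "s_coeff \<nu> j * z ^ (2 * n + 1 - \<nu> * j) = z * (s_coeff \<nu> j * z ^ (2 * n - \<nu> * j))"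
    by (simp add: algebra_simps)
qed

lemma Q_le: assumes "cmod z < 1"
  shows "cmod (poly (s_rev_poly n \<nu>) z) \<le> cmod z * cmod (poly (s_poly n \<nu>) z)"
proof -
  define h where "h z = q1 z / poly (s_poly n \<nu>) z" for z
  have nzc: "\<And>z. z \<in> cball 0 1 \<Longrightarrow> poly (s_poly n \<nu>) z \<noteq> 0" using S_nz by simp
  have "cmod (h z) \<le> 1"
  proof (rule maximum_modulus_frontier[of h "cball 0 1"])
    show "h holomorphic_on interior (cball 0 1)"
      unfolding h_def q1_def using nzc by (auto intro!: holomorphic_intros)
    show "continuous_on (closure (cball 0 1)) h"
      unfolding h_def q1_def using nzc by (auto intro!: continuous_intros)
    show "bounded (cball (0::complex) 1)" by simp
    show "z \<in> cball 0 1" using assms by simp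
  next
    fix u :: complex assume "u \<in> frontier (cball 0 1)"
    then have u1: "cmod u = 1" by simp
    then have u0: "u \<noteq> 0" by auto
    have "u * cnj u = 1" using complex_norm_square[of u] u1 by simp
    then have inv: "1 / u = cnj u" using u0 by (simp add: field_simps)
    have "cmod (q1 u) = cmod (u * q1 u)" using u1 by (simp add: norm_mult)
    also have "\<dots> = cmod (poly (s_poly n \<nu>) u)"
      unfolding Q_q1[symmetric] Q_refl[OF u0] inv S_cnj using u1 by (simp add: norm_mult norm_power)
    finally show "cmod (h u) \<le> 1" unfolding h_def using nzc[of u] u1 by (simp add: norm_divide)
  qed
  then have "cmod (q1 z) \<le> cmod (poly (s_poly n \<nu>) z)"
    using nzc[of z] assms unfolding h_def by (simp add: norm_divide divide_le_eq)
  then show ?thesis unfolding Q_q1 norm_mult by (simp add: mult_left_mono)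
qed

lemma P_nz_inside: assumes "cmod z < 1" shows "poly (root_poly n \<nu>) z \<noteq> 0"
proof (cases "z = 0")
  case True
  have "poly (s_poly n \<nu>) 0 = 1"
    unfolding poly_S_exp using nu1 by (auto simp: sum.atLeast_Suc_atMost intro!: sum.neutral)
  then show ?thesis unfolding poly_P Q_q1 True by simp
next
  case False
  have snz: "poly (s_poly n \<nu>) z \<noteq> 0" using S_nz assms by simp
  show ?thesis
  proof
    assume "poly (root_poly n \<nu>) z = 0"
    then have "poly (s_rev_poly n \<nu>) z = - poly (s_poly n \<nu>) z" unfolding poly_P
      by (simp add: eq_neg_iff_add_eq_0 add.commute)
    then have "cmod (poly (s_poly n \<nu>) z) \<le> cmod z * cmod (poly (s_poly n \<nu>) z)"
      using Q_le[OF assms] by simp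
    moreover have "cmod z * cmod (poly (s_poly n \<nu>) z) < cmod (poly (s_poly n \<nu>) z)"
      using assms snz by simp
    ultimately show False by simp
  qed
qed

lemma P_root_circle: assumes "poly (root_poly n \<nu>) z = 0" shows "cmod z = 1"
proof -
  have "\<not> cmod z < 1" using P_nz_inside assms by blast
  moreover have "\<not> cmod z > 1"
  proof
    assume z1: "cmod z > 1"
    then have z0: "z \<noteq> 0" by auto
    have "cmod (1/z) < 1" using z1 by (simp add: norm_divide divide_less_eq)
    then have "poly (root_poly n \<nu>) (1/z) \<noteq> 0" by (rule P_nz_inside)
    moreover have "poly (root_poly n \<nu>) z = z ^ (2*n+1) * poly (root_poly n \<nu>) (1/z)"
      unfolding poly_P using S_refl[OF z0] Q_refl[OF z0] by (simp add: algebra_simps)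
    ultimately show False using assms z0 by simp
  qed
  ultimately show ?thesis by simp
qed

end


lemma reflect_lin: "reflect_poly [:-x, 1:] = [:1, -(x::complex):]"
  by (simp add: reflect_poly_def)

lemma reflect_prod_lin: "reflect_poly (\<Prod>x\<in>#R. [:-x, 1:]) = (\<Prod>x\<in>#R. [:1, -(x::complex):])"
proof (induction R)
  case (add x R)
  then show ?case by (simp only: prod_mset.insert reflect_poly_mult reflect_lin)
qed simp

lemma fps_lin: "fps_of_poly [:1, -x:] = 1 - fps_const (x::complex) * fps_X"
  by (simp add: fps_eq_iff coeff_pCons split: nat.split)

lemma fps_prod_lin: "fps_of_poly (\<Prod>x\<in>#R. [:1, -(x::complex):]) = Ff R"
proof (induction R)
  case (add x R)
  have "Ff (add_mset x R) = (1 - fps_const x * fps_X) * Ff R" by (simp add: Ff_def)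
  then show ?case using add by (simp only: prod_mset.insert fps_of_poly_mult fps_lin)
qed (simp add: Ff_def)

lemma trig_sum_gen:
  fixes t :: "complex \<Rightarrow> real" and A1 A2 :: "nat \<Rightarrow> real"
  assumes C: "\<And>m. m \<in> {1..n} \<Longrightarrow> (\<Sum>z\<in>#R. cos (real m * t z)) = (if m = \<nu> then 1 else 0)"
      and S: "\<And>m. m \<in> {1..n} \<Longrightarrow> (\<Sum>z\<in>#R. sin (real m * t z)) = 0"
      and nu: "\<nu> \<in> {1..n}"
  shows "(\<Sum>z\<in>#R. \<Sum>m=1..n. A1 m * cos (real m * t z) + A2 m * sin (real m * t z)) = A1 \<nu>"
proof -
  have "(\<Sum>z\<in>#R. \<Sum>m=1..n. A1 m * cos (real m * t z) + A2 m * sin (real m * t z))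
      = (\<Sum>m=1..n. A1 m * (\<Sum>z\<in>#R. cos (real m * t z)) + A2 m * (\<Sum>z\<in>#R. sin (real m * t z)))"
    by (simp add: msum_swap msum_add msum_cmult)
  also have "\<dots> = (\<Sum>m=1..n. (if m = \<nu> then A1 m else 0))"
    by (rule sum.cong[OF refl]) (simp add: C S)
  also have "\<dots> = A1 \<nu>" using nu by (simp add: sum.delta')
  finally show ?thesis .
qed

context
  fixes n \<nu> :: nat
  assumes n2: "n \<ge> 2" and nu1: "1 \<le> \<nu>" and nun: "\<nu> \<le> n"
begin

definition cs :: "nat \<Rightarrow> complex" where
  "cs k = (\<Sum>j=0..n div \<nu>. if \<nu> * j = k then s_coeff \<nu> j else 0)"

lemma coeff_S: "coeff (s_poly n \<nu>) k = cs k"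
  by (simp add: s_poly_def cs_def coeff_sum)

lemma coeff_Q: "coeff (s_rev_poly n \<nu>) k = (if k \<le> 2*n+1 then cs (2*n+1 - k) else 0)"
proof -
  have "coeff (s_rev_poly n \<nu>) k = (\<Sum>j=0..n div \<nu>. if 2*n+1 - \<nu> * j = k then s_coeff \<nu> j else 0)"
    by (simp add: s_rev_poly_def coeff_sum)
  also have "\<dots> = (if k \<le> 2*n+1 then cs (2*n+1 - k) else 0)"
  proof (cases "k \<le> 2*n+1")
    case True
    then show ?thesis unfolding cs_def
      by (auto intro!: sum.cong dest!: nuj_le[OF n2 nu1 nun])
  next
    case False
    then show ?thesis by (auto intro!: sum.neutral)
  qed
  finally show ?thesis .
qed

lemma cs_big: "k > n \<Longrightarrow> cs k = 0"
  unfolding cs_def by (auto intro!: sum.neutral dest!: nuj_le[OF n2 nu1 nun])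

lemma cs_dvd: assumes "k \<le> n" shows "cs k = (if \<nu> dvd k then s_coeff \<nu> (k div \<nu>) else 0)"
proof (cases "\<nu> dvd k")
  case True
  then obtain j0 where k: "k = \<nu> * j0" by blast
  have j0: "j0 \<le> n div \<nu>" using assms k nu1
    by (metis div_le_mono nonzero_mult_div_cancel_left not_one_le_zero)
  have "cs k = (\<Sum>j=0..n div \<nu>. if j = j0 then s_coeff \<nu> j else 0)"
    unfolding cs_def k using nu1 by (intro sum.cong) auto
  also have "\<dots> = s_coeff \<nu> j0" using j0 by (simp add: sum.delta')
  finally show ?thesis using True k nu1 by simp
next
  case False
  then show ?thesis unfolding cs_def by (auto intro!: sum.neutral)
qed

lemma cs_0: "cs 0 = 1"
  using cs_dvd[of 0] by (simp add: s_coeff_def)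

lemma s_coeff_rec: "of_nat (\<nu> * Suc j) * s_coeff \<nu> (Suc j) = - s_coeff \<nu> j"
proof -
  have nz: "(of_nat \<nu> :: complex) \<noteq> 0" using nu1 by simp
  have "of_nat (\<nu> * Suc j) * s_coeff \<nu> (Suc j)
      = (of_nat \<nu> * of_nat (Suc j)) * ((-1) * (-1)^j / ((of_nat \<nu> * of_nat \<nu> ^ j) * (of_nat (Suc j) * of_nat (fact j))))"
    unfolding s_coeff_def by (simp only: of_nat_mult power_Suc fact_Suc of_nat_id)
  also have "\<dots> = - ((-1)^j / (of_nat \<nu> ^ j * of_nat (fact j)))"
  proof -
    have g: "\<And>(v1::complex) v2 v3 v4 v5. v1 \<noteq> 0 \<Longrightarrow> v2 \<noteq> 0 \<Longrightarrow> v3 \<noteq> 0 \<Longrightarrow> v4 \<noteq> 0 \<Longrightarrow>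
       (v1 * v2) * ((-1) * v5 / ((v1 * v3) * (v2 * v4))) = - (v5 / (v3 * v4))" by (simp add: field_simps)
    have sj: "(of_nat (Suc j) :: complex) \<noteq> 0" by (metis of_nat_eq_0_iff nat.distinct(1))
    show ?thesis by (rule g) (use nz sj in auto)
  qed
  finally show ?thesis unfolding s_coeff_def .
qed

lemma cs_rec: assumes "1 \<le> i" "i \<le> n"
  shows "of_nat i * cs i = - (if \<nu> \<le> i then cs (i - \<nu>) else 0)"
proof (cases "\<nu> dvd i")
  case True
  then obtain j where i: "i = \<nu> * j" by blast
  with assms have "j \<noteq> 0" by auto
  then obtain j' where j: "j = Suc j'" by (cases j) auto
  have le: "\<nu> \<le> i" using i j by simp
  have im: "i - \<nu> = \<nu> * j'" using i j by simp
  have "cs i = s_coeff \<nu> (Suc j')" using cs_dvd[of i] assms i j nu1 by simp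
  moreover have "cs (i - \<nu>) = s_coeff \<nu> j'" using cs_dvd[of "i - \<nu>"] assms im nu1 by simp
  ultimately show ?thesis using s_coeff_rec[of j'] le i j by simp
next
  case False
  have "cs i = 0" using cs_dvd[of i] assms False by simp
  moreover have "\<nu> \<le> i \<Longrightarrow> cs (i - \<nu>) = 0"
  proof -
    assume le: "\<nu> \<le> i"
    have ii: "i = (i - \<nu>) + \<nu>" using le by simp
    have "\<not> \<nu> dvd (i - \<nu>)" using False by (subst (asm) ii) (metis dvd_add_triv_right_iff)
    then show ?thesis using cs_dvd[of "i - \<nu>"] assms by simp
  qed
  ultimately show ?thesis by simp
qed

lemma coeff_P: "coeff (root_poly n \<nu>) k = cs k + (if k \<le> 2*n+1 then cs (2*n+1 - k) else 0)"
  by (simp add: root_poly_def coeff_S coeff_Q)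

lemma coeff_P_low: "k \<le> n \<Longrightarrow> coeff (root_poly n \<nu>) k = cs k"
  unfolding coeff_P using cs_big[of "2*n+1-k"] by simp

lemma degree_P: "degree (root_poly n \<nu>) = 2*n+1" and lead_P: "lead_coeff (root_poly n \<nu>) = 1"
proof -
  have c: "coeff (root_poly n \<nu>) (2*n+1) = 1" unfolding coeff_P using cs_big[of "2*n+1"] cs_0 by simp
  have "\<forall>k>2*n+1. coeff (root_poly n \<nu>) k = 0" unfolding coeff_P using cs_big by simp
  then have "degree (root_poly n \<nu>) \<le> 2*n+1" by (intro degree_le) auto
  moreover have "2*n+1 \<le> degree (root_poly n \<nu>)" using c by (intro le_degree) simp
  ultimately show d: "degree (root_poly n \<nu>) = 2*n+1" by simp
  show "lead_coeff (root_poly n \<nu>) = 1" using c d by simp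
qed

lemma P_nz: "root_poly n \<nu> \<noteq> 0"
  using lead_P by auto

lemma reflect_P: "reflect_poly (root_poly n \<nu>) = root_poly n \<nu>"
proof (rule poly_eqI)
  fix k
  show "coeff (reflect_poly (root_poly n \<nu>)) k = coeff (root_poly n \<nu>) k"
    unfolding coeff_reflect_poly degree_P
    by (cases "k \<le> 2*n+1") (auto simp: coeff_P cs_big)
qed

lemma fps_P: "fps_of_poly (root_poly n \<nu>) = Ff (proots (root_poly n \<nu>))"
proof -
  have "root_poly n \<nu> = (\<Prod>x\<in>#proots (root_poly n \<nu>). [:-x, 1:])"
    using complex_poly_decompose_multiset[of "root_poly n \<nu>"] lead_P by simp
  then have "root_poly n \<nu> = (\<Prod>x\<in>#proots (root_poly n \<nu>). [:1, -x:])"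
    using reflect_P reflect_prod_lin by metis
  then show ?thesis using fps_prod_lin by metis
qed

lemma power_sums:
  assumes "1 \<le> m" "m \<le> n"
  shows "(\<Sum>z\<in>#proots (root_poly n \<nu>). z ^ m) = (if m = \<nu> then 1 else 0)"
proof -
  define R where "R = proots (root_poly n \<nu>)"
  define F where "F = Ff R"
  define E where "E = fps_deriv F + fps_X ^ (\<nu> - 1) * F"
  have FP: "F = fps_of_poly (root_poly n \<nu>)" unfolding F_def R_def fps_P ..
  have E0: "E $ k = 0" if "k < n" for k
  proof -
    have "E $ k = of_nat (Suc k) * cs (Suc k) + (if k < \<nu> - 1 then 0 else cs (k - (\<nu> - 1)))"
      unfolding E_def FP fps_of_poly_pderiv[symmetric] using that
      by (simp add: fps_X_power_mult_nth coeff_pderiv coeff_P_low)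
    also have "\<dots> = 0"
      using cs_rec[of "Suc k"] that nu1 by (auto simp: Suc_diff_le)
    finally show ?thesis .
  qed
  have EF: "E = F * (fps_X ^ (\<nu> - 1) - Gf R)"
    unfolding E_def F_def newton_fps by (simp add: algebra_simps)
  have F0: "F $ 0 = 1" unfolding FP using coeff_P_low[of 0] cs_0 by simp
  have D: "fps_X ^ (\<nu> - 1) - Gf R = inverse F * E"
    unfolding EF using inverse_mult_eq_1[of F] F0 by (simp add: mult.assoc[symmetric])
  have "(fps_X ^ (\<nu> - 1) - Gf R) $ (m - 1) = 0"
    unfolding D fps_mult_nth using E0 assms by (auto intro!: sum.neutral)
  moreover have "Gf R $ (m - 1) = (\<Sum>z\<in>#R. z ^ m)"
  proof -
    have "\<And>z::complex. z * z^(m-1) = z^m" using assms by (cases m) auto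
    then show ?thesis by (simp add: Gf_def)
  qed
  moreover have "(m - 1 = \<nu> - 1) = (m = \<nu>)" using assms nu1 by auto
  ultimately show ?thesis unfolding R_def[symmetric] by (auto split: if_splits)
qed

end


lemma mset_cong: "(\<And>z. z \<in># R \<Longrightarrow> f z = g z) \<Longrightarrow> (\<Sum>z\<in>#R. f z) = (\<Sum>z\<in>#R. g z)"
  by (metis image_mset_cong)

theorem corollary2p2:
  fixes n \<nu> :: nat and a b :: "nat \<Rightarrow> real"
  assumes "n \<ge> 2" and "1 \<le> \<nu>" and "\<nu> \<le> n"
  shows "a \<nu> = (\<Sum>z\<in>#proots (root_poly n \<nu>). trig_poly n a b (- Arg2pi z))
       \<and> b \<nu> = (\<Sum>z\<in>#proots (root_poly n \<nu>). trig_poly n a b (pi / (2 * real \<nu>) - Arg2pi z))"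
proof -
  note hyps = assms(1) assms(2) assms(3)
  define R where "R = proots (root_poly n \<nu>)"
  have circ: "cmod z = 1" if "z \<in># R" for z
    using that P_root_circle[OF hyps] P_nz[OF hyps] unfolding R_def by simp
  have ez: "z = exp (\<i> * of_real (Arg2pi z))" if "z \<in># R" for z
    using Arg2pi[of z] circ[OF that] unfolding is_Arg_def by simp
  have pw: "Re (z ^ m) = cos (real m * Arg2pi z) \<and> Im (z ^ m) = sin (real m * Arg2pi z)"
    if "z \<in># R" for z m
  proof -
    have "z ^ m = exp (of_nat m * (\<i> * of_real (Arg2pi z)))"
      by (subst ez[OF that]) (simp only: exp_of_nat_mult)
    then show ?thesis by (simp add: Re_exp Im_exp)
  qed
  have C: "(\<Sum>z\<in>#R. cos (real m * Arg2pi z)) = (if m = \<nu> then 1 else 0)" if "m \<in> {1..n}" for m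
  proof -
    have "(\<Sum>z\<in>#R. cos (real m * Arg2pi z)) = (\<Sum>z\<in>#R. Re (z ^ m))"
      by (rule mset_cong) (use pw in auto)
    also have "\<dots> = Re (\<Sum>z\<in>#R. z ^ m)" by (simp add: msum_Re)
    also have "\<dots> = (if m = \<nu> then 1 else 0)"
      using power_sums[OF hyps, of m] that unfolding R_def by simp
    finally show ?thesis .
  qed
  have S: "(\<Sum>z\<in>#R. sin (real m * Arg2pi z)) = 0" if "m \<in> {1..n}" for m
  proof -
    have "(\<Sum>z\<in>#R. sin (real m * Arg2pi z)) = (\<Sum>z\<in>#R. Im (z ^ m))"
      by (rule mset_cong) (use pw in auto)
    also have "\<dots> = Im (\<Sum>z\<in>#R. z ^ m)" by (simp add: msum_Im)
    also have "\<dots> = 0"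
      using power_sums[OF hyps, of m] that unfolding R_def by simp
    finally show ?thesis .
  qed
  have nu: "\<nu> \<in> {1..n}" using hyps by simp
  have part1: "(\<Sum>z\<in>#R. trig_poly n a b (- Arg2pi z)) = a \<nu>"
  proof -
    have "(\<Sum>z\<in>#R. trig_poly n a b (- Arg2pi z))
        = (\<Sum>z\<in>#R. \<Sum>m=1..n. a m * cos (real m * Arg2pi z) + (- b m) * sin (real m * Arg2pi z))"
      unfolding trig_poly_def by (intro mset_cong sum.cong refl) simp
    also have "\<dots> = a \<nu>" by (rule trig_sum_gen[OF C S nu])
    finally show ?thesis .
  qed
  define c where "c = pi / (2 * real \<nu>)"
  have nuc: "real \<nu> * c = pi / 2" using hyps unfolding c_def by simp
  have part2: "(\<Sum>z\<in>#R. trig_poly n a b (c - Arg2pi z)) = b \<nu>"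
  proof -
    have "(\<Sum>z\<in>#R. trig_poly n a b (c - Arg2pi z))
        = (\<Sum>z\<in>#R. \<Sum>m=1..n. (a m * cos (real m * c) + b m * sin (real m * c)) * cos (real m * Arg2pi z)
              + (a m * sin (real m * c) - b m * cos (real m * c)) * sin (real m * Arg2pi z))"
      unfolding trig_poly_def
      by (intro mset_cong sum.cong refl) (simp add: right_diff_distrib cos_diff sin_diff algebra_simps)
    also have "\<dots> = a \<nu> * cos (real \<nu> * c) + b \<nu> * sin (real \<nu> * c)"
      by (rule trig_sum_gen[OF C S nu])
    also have "\<dots> = b \<nu>" unfolding nuc by simp
    finally show ?thesis .
  qed
  show ?thesis using part1 part2 unfolding R_def c_def by simp
qed

end
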